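(* Let $T^{(0)},T^{(1)}$ be closed tetrahedra with vertices $P^{(0)}_1,\dots,P^{(0)}_4$ and $P^{(1)}_1,\dots,P^{(1)}_4$ respectively. Then $$d_{\mathcal H}(T^{(0)},T^{(1)})\le\min_{\wp}\max_{1\le i\le4}|P^{(0)}_i-P^{(1)}_{\wp(i)}|,$$ where the minimum runs over permutations $\wp$ of $\{1,2,3,4\}$. Moreover, if both $T^{(0)},T^{(1)}$ are contained in $B_R(0)$ and have inradius greater than $r_1>0$, there is a constant $A_1>0$ depending only on $R$ and $r_1$ such that $$\min_{\wp}\max_{1\le i\le4}|P^{(0)}_i-P^{(1)}_{\wp(i)}|\le A_1\,d_{\mathcal H}(T^{(0)},T^{(1)}).$$
   Context: $d_{\mathcal H}$ denotes the Hausdorff distance between compact subsets of $\mathbb{R}^3$; $B_R(0)$ is the open ball of radius $R$ centered at the origin. *)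

theory Defs
  imports "HOL-Analysis.Analysis" "HOL-Combinatorics.Permutations"
begin

definition hausdorff_dist :: "'a::metric_space set \<Rightarrow> 'a set \<Rightarrow> real" where
  "hausdorff_dist A B = max (SUP a\<in>A. infdist a B) (SUP b\<in>B. infdist b A)"

definition tetra_vertices :: "(nat \<Rightarrow> real^3) \<Rightarrow> bool" where
  "tetra_vertices P \<longleftrightarrow> inj_on P {1..4} \<and> \<not> affine_dependent (P ` {1..4})"

definition tetra :: "(nat \<Rightarrow> real^3) \<Rightarrow> (real^3) set" where
  "tetra P = convex hull (P ` {1..4})"

definition inradius :: "(real^3) set \<Rightarrow> real" where
  "inradius S = Sup {r. 0 < r \<and> (\<exists>x. ball x r \<subseteq> S)}"

definition vertex_dist :: "(nat \<Rightarrow> real^3) \<Rightarrow> (nat \<Rightarrow> real^3) \<Rightarrow> real" where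
  "vertex_dist P Q = Min ((\<lambda>p. Max ((\<lambda>i. norm (P i - Q (p i))) ` {1..4}))
                          ` {p. p permutes {1..4}})"

end

theory Submission
  imports Defs
begin

lemma aff_convex:
  assumes "convex S"
  shows "convex_on S (\<lambda>z::real^3. a \<bullet> z + b)"
  unfolding convex_on_def
proof (intro conjI assms ballI allI impI)
  fix x y and u v :: real
  assume "u + v = 1"
  hence "b = u * b + v * b" by (metis distrib_right mult_1)
  thus "a \<bullet> (u *\<^sub>R x + v *\<^sub>R y) + b \<le> u * (a \<bullet> x + b) + v * (a \<bullet> y + b)"
    by (simp add: inner_simps algebra_simps)
qed

lemma tetra_compact: "compact (tetra P)" and tetra_ne: "tetra P \<noteq> {}"
  unfolding tetra_def by (simp_all add: compact_convex_hull finite_imp_compact)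

lemma vert_in: "k \<in> {1..4} \<Longrightarrow> P k \<in> tetra P"
  unfolding tetra_def by (rule hull_inc) auto

lemma hd_facts:
  fixes A B :: "(real^3) set"
  assumes "compact A" "compact B" "A \<noteq> {}" "B \<noteq> {}"
  shows "\<forall>x\<in>A. infdist x B \<le> hausdorff_dist A B"
    and "\<forall>y\<in>B. infdist y A \<le> hausdorff_dist A B"
proof -
  have b1: "bdd_above ((\<lambda>a. infdist a B) ` A)"
    by (intro bounded_imp_bdd_above compact_imp_bounded compact_continuous_image
        continuous_on_infdist continuous_on_id assms)
  have b2: "bdd_above ((\<lambda>a. infdist a A) ` B)"
    by (intro bounded_imp_bdd_above compact_imp_bounded compact_continuous_image
        continuous_on_infdist continuous_on_id assms)
  show "\<forall>x\<in>A. infdist x B \<le> hausdorff_dist A B"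
    using cSUP_upper[OF _ b1] unfolding hausdorff_dist_def by (meson max.coboundedI1)
  show "\<forall>y\<in>B. infdist y A \<le> hausdorff_dist A B"
    using cSUP_upper[OF _ b2] unfolding hausdorff_dist_def by (meson max.coboundedI2)
qed

lemma hd_le:
  fixes P Q :: "nat \<Rightarrow> real^3"
  assumes p: "p permutes {1..4}"
  shows "hausdorff_dist (tetra P) (tetra Q) \<le> Max ((\<lambda>i. norm (P i - Q (p i))) ` {1..4})"
proof -
  define M where "M = Max ((\<lambda>i. norm (P i - Q (p i))) ` {1..4})"
  define G where "G = (\<lambda>k. (P k, Q (p k))) ` {1..4::nat}"
  have cv: "convex_on (convex hull G) (\<lambda>w. norm (fst w - snd w))"
  proof -
    have "convex_on (convex hull G) (\<lambda>w. dist 0 (fst w - snd w))"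
      unfolding convex_on_def
    proof (intro conjI convex_convex_hull ballI allI impI)
      fix x y :: "(real^3) \<times> (real^3)" and u v :: real
      assume uv: "0 \<le> u" "0 \<le> v" "u + v = 1"
      have "fst (u *\<^sub>R x + v *\<^sub>R y) - snd (u *\<^sub>R x + v *\<^sub>R y)
           = u *\<^sub>R (fst x - snd x) + v *\<^sub>R (fst y - snd y)"
        by (simp add: algebra_simps)
      hence "norm (fst (u *\<^sub>R x + v *\<^sub>R y) - snd (u *\<^sub>R x + v *\<^sub>R y))
           \<le> norm (u *\<^sub>R (fst x - snd x)) + norm (v *\<^sub>R (fst y - snd y))"
        by (metis norm_triangle_ineq)
      also have "\<dots> = u * norm (fst x - snd x) + v * norm (fst y - snd y)"
        using uv by simp
      finally show "dist 0 (fst (u *\<^sub>R x + v *\<^sub>R y) - snd (u *\<^sub>R x + v *\<^sub>R y))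
           \<le> u * dist 0 (fst x - snd x) + v * dist 0 (fst y - snd y)" by simp
    qed
    thus ?thesis by simp
  qed
  have Gb: "\<forall>w\<in>G. norm (fst w - snd w) \<le> M"
    unfolding G_def M_def by (auto intro: Max_ge)
  have H: "\<forall>w\<in>convex hull G. norm (fst w - snd w) \<le> M"
    using convex_on_convex_hull_bound[OF cv Gb] .
  have fG: "fst ` G = P ` {1..4}" unfolding G_def by force
  have "snd ` G = Q ` (p ` {1..4})" unfolding G_def by force
  hence sG: "snd ` G = Q ` {1..4}" using permutes_image[OF p] by simp
  have F: "fst ` (convex hull G) = tetra P"
    unfolding tetra_def using convex_hull_linear_image[OF linear_fst, of G] fG by simp
  have S: "snd ` (convex hull G) = tetra Q"
    unfolding tetra_def using convex_hull_linear_image[OF linear_snd, of G] sG by simp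
  have 1: "(SUP a\<in>tetra P. infdist a (tetra Q)) \<le> M"
  proof (rule cSUP_least[OF tetra_ne])
    fix x assume "x \<in> tetra P"
    then obtain w where w: "w \<in> convex hull G" "x = fst w" using F by force
    have "snd w \<in> tetra Q" using S w by force
    hence "infdist x (tetra Q) \<le> dist x (snd w)" by (rule infdist_le)
    also have "\<dots> \<le> M" using H w by (simp add: dist_norm)
    finally show "infdist x (tetra Q) \<le> M" .
  qed
  have 2: "(SUP a\<in>tetra Q. infdist a (tetra P)) \<le> M"
  proof (rule cSUP_least[OF tetra_ne])
    fix x assume "x \<in> tetra Q"
    then obtain w where w: "w \<in> convex hull G" "x = snd w" using S by force
    have "fst w \<in> tetra P" using F w by force
    hence "infdist x (tetra P) \<le> dist x (fst w)" by (rule infdist_le)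
    also have "\<dots> \<le> M" using H w by (simp add: dist_norm norm_minus_commute)
    finally show "infdist x (tetra P) \<le> M" .
  qed
  show ?thesis using 1 2 unfolding hausdorff_dist_def M_def by simp
qed

lemma bary:
  assumes "tetra_vertices P" "i \<in> {1..4}"
  shows "\<exists>a::real^3. \<exists>b. a \<bullet> P i + b = 1 \<and> (\<forall>k\<in>{1..4}. k \<noteq> i \<longrightarrow> a \<bullet> P k + b = 0)"
proof -
  let ?S = "P ` ({1..4} - {i})"
  have inj: "inj_on P {1..4}" and nd: "\<not> affine_dependent (P ` {1..4})"
    using assms(1) unfolding tetra_vertices_def by auto
  have notin: "P i \<notin> ?S" using inj assms(2) by (auto simp: inj_on_def)
  have "P ` {1..4} = insert (P i) ?S" using assms(2) by auto
  hence ind: "\<not> dependent ((\<lambda>x. - P i + x) ` ?S)"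
    using nd affine_dependent_iff_dependent[OF notin] by simp
  obtain g :: "real^3 \<Rightarrow> real" where g: "linear g" "\<forall>x\<in>(\<lambda>x. - P i + x) ` ?S. g x = -1"
    using linear_independent_extend[OF ind, of "\<lambda>_. -1"] by auto
  define a where "a = adjoint g 1"
  have ga: "g x = a \<bullet> x" for x
    using adjoint_works[OF g(1), of x 1] unfolding a_def by (simp add: inner_commute)
  show ?thesis
  proof (intro exI conjI ballI impI)
    show "a \<bullet> P i + (1 - a \<bullet> P i) = 1" by simp
    fix k assume k: "k \<in> {1..4}" "k \<noteq> i"
    hence "g (- P i + P k) = -1" using g(2) by auto
    thus "a \<bullet> P k + (1 - a \<bullet> P i) = 0" by (simp add: ga inner_simps)
  qed
qed

lemma phi_props:
  fixes a :: "real^3"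
  assumes tv: "tetra_vertices P" and i: "i \<in> {1..4}"
    and ab: "a \<bullet> P i + b = 1" "\<forall>k\<in>{1..4}. k \<noteq> i \<longrightarrow> a \<bullet> P k + b = 0"
    and r: "r > 0" "ball c r \<subseteq> tetra P"
  shows "\<forall>z\<in>tetra P. 0 \<le> a \<bullet> z + b \<and> a \<bullet> z + b \<le> 1" and "norm a \<le> 1 / r"
proof -
  have v: "\<forall>x\<in>P ` {1..4}. a \<bullet> x + b \<le> 1" using ab by force
  have v2: "\<forall>x\<in>P ` {1..4}. (-a) \<bullet> x + (-b) \<le> 0" using ab by force
  have u1: "\<forall>z\<in>tetra P. a \<bullet> z + b \<le> 1"
    unfolding tetra_def by (rule convex_on_convex_hull_bound[OF aff_convex[OF convex_convex_hull] v])
  have u2: "\<forall>z\<in>tetra P. (-a) \<bullet> z + (-b) \<le> 0"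
    unfolding tetra_def by (rule convex_on_convex_hull_bound[OF aff_convex[OF convex_convex_hull] v2])
  show A: "\<forall>z\<in>tetra P. 0 \<le> a \<bullet> z + b \<and> a \<bullet> z + b \<le> 1"
    using u1 u2 by (auto simp: inner_simps)
  show "norm a \<le> 1 / r"
  proof (cases "a = 0")
    case True thus ?thesis using r by simp
  next
    case False
    define s where "s = (r / 2 / norm a) *\<^sub>R a"
    have ns: "norm s = r / 2" using False r by (simp add: s_def)
    have "c + s \<in> ball c r" "c - s \<in> ball c r" using ns r by (auto simp: dist_norm)
    hence "c + s \<in> tetra P" "c - s \<in> tetra P" using r by auto
    hence "a \<bullet> (c + s) + b \<le> 1" "0 \<le> a \<bullet> (c - s) + b" using A by auto
    hence "2 * (a \<bullet> s) \<le> 1" by (simp add: inner_simps)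
    moreover have "a \<bullet> s = r / 2 * norm a"
      using False by (simp add: s_def power2_norm_eq_inner[symmetric] power2_eq_square)
    ultimately have "r * norm a \<le> 1" by simp
    thus ?thesis using r by (simp add: field_simps mult.commute)
  qed
qed

lemma separation:
  assumes tv: "tetra_vertices P" and i: "i \<in> {1..4}" and k: "k \<in> {1..4}" "k \<noteq> i"
    and r: "r > 0" "ball c r \<subseteq> tetra P"
  shows "r \<le> norm (P i - P k)"
proof -
  obtain a b where ab: "a \<bullet> P i + b = 1" "\<forall>k\<in>{1..4}. k \<noteq> i \<longrightarrow> a \<bullet> P k + b = 0"
    using bary[OF tv i] by blast
  have na: "norm a \<le> 1 / r" using phi_props[OF tv i ab r] by blast
  have "a \<bullet> P k + b = 0" using ab k by auto
  hence "1 = a \<bullet> (P i - P k)" using ab by (simp add: inner_simps)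
  also have "\<dots> \<le> norm a * norm (P i - P k)" by (rule norm_cauchy_schwarz)
  also have "\<dots> \<le> 1 / r * norm (P i - P k)" using na by (intro mult_right_mono) auto
  finally show ?thesis using r by (simp add: field_simps)
qed

lemma vertex_close:
  fixes P Q :: "nat \<Rightarrow> real^3"
  assumes tv: "tetra_vertices P" and i: "i \<in> {1..4}" and r: "r > 0" "ball c r \<subseteq> tetra P"
    and R: "tetra P \<subseteq> ball 0 R"
    and h1: "\<forall>x\<in>tetra P. infdist x (tetra Q) \<le> d"
    and h2: "\<forall>y\<in>tetra Q. infdist y (tetra P) \<le> d"
  shows "\<exists>j\<in>{1..4}. norm (P i - Q j) \<le> d * (1 + 4 * R / r)"
proof -
  obtain a b where ab: "a \<bullet> P i + b = 1" "\<forall>k\<in>{1..4}. k \<noteq> i \<longrightarrow> a \<bullet> P k + b = 0"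
    using bary[OF tv i] by blast
  note ph = phi_props[OF tv i ab r]
  define f where "f = (\<lambda>z. a \<bullet> z + b)"
  have fdiff: "\<bar>f x - f y\<bar> \<le> dist x y / r" for x y
  proof -
    have "\<bar>f x - f y\<bar> = \<bar>a \<bullet> (x - y)\<bar>" by (simp add: f_def inner_simps)
    also have "\<dots> \<le> norm a * norm (x - y)" by (rule Cauchy_Schwarz_ineq2)
    also have "\<dots> \<le> 1 / r * norm (x - y)" using ph(2) by (intro mult_right_mono) auto
    finally show ?thesis by (simp add: dist_norm)
  qed
  have Pi: "P i \<in> tetra P" using i by (rule vert_in)
  have "P i \<in> ball 0 R" using R Pi by auto
  hence R0: "R > 0" by (metis mem_ball zero_le_dist order_le_less_trans)
  obtain y where y: "y \<in> tetra Q" "infdist (P i) (tetra Q) = dist (P i) y"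
    using infdist_attains_inf[OF compact_imp_closed[OF tetra_compact] tetra_ne] by blast
  have dy: "dist (P i) y \<le> d" using y h1 Pi by auto
  have "dist (P i) y / r \<le> d / r" using dy r by (simp add: divide_right_mono)
  moreover have "f (P i) - f y \<le> dist (P i) y / r" using fdiff[of "P i" y] by (simp add: abs_le_iff)
  moreover have "f (P i) = 1" using ab(1) by (simp add: f_def)
  ultimately have fy: "f y \<ge> 1 - d / r" by linarith
  define m where "m = Max (f ` Q ` {1..4})"
  have fin: "finite (f ` Q ` {1..4})" by simp
  have ne: "f ` Q ` {1..4} \<noteq> {}" by simp
  have "\<forall>x\<in>Q ` {1..4}. f x \<le> m" unfolding m_def using fin by auto
  hence "\<forall>x\<in>tetra Q. f x \<le> m" unfolding tetra_def f_def
    by (intro convex_on_convex_hull_bound[OF aff_convex[OF convex_convex_hull]]) simp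
  hence ym: "f y \<le> m" using y by auto
  have "m \<in> f ` Q ` {1..4}" unfolding m_def using Max_in[OF fin ne] .
  then obtain j where j: "j \<in> {1..4}" "m = f (Q j)" by auto
  have Qj: "Q j \<in> tetra Q" using j by (intro vert_in)
  obtain z where z: "z \<in> tetra P" "infdist (Q j) (tetra P) = dist (Q j) z"
    using infdist_attains_inf[OF compact_imp_closed[OF tetra_compact] tetra_ne] by blast
  have dz: "dist (Q j) z \<le> d" using z h2 Qj by auto
  have "dist (Q j) z / r \<le> d / r" using dz r by (simp add: divide_right_mono)
  hence fz: "1 - f z \<le> 2 * d / r" using fdiff[of "Q j" z] fy ym j by linarith
  have hb: "\<forall>x\<in>P ` {1..4}. dist (P i) x + (2 * R) * (a \<bullet> x) + (2 * R * b - 2 * R) \<le> 0"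
  proof
    fix x assume "x \<in> P ` {1..4}"
    then obtain k where k: "k \<in> {1..4}" "x = P k" by auto
    show "dist (P i) x + (2 * R) * (a \<bullet> x) + (2 * R * b - 2 * R) \<le> 0"
    proof (cases "k = i")
      case True
      hence "a \<bullet> x = 1 - b" using k ab(1) by simp
      hence "2 * R * (a \<bullet> x) = 2 * R - 2 * R * b" by (simp add: right_diff_distrib)
      moreover have "dist (P i) x = 0" using k True by simp
      ultimately show ?thesis by linarith
    next
      case False
      have "a \<bullet> x + b = 0" using ab(2) k False by auto
      moreover have "P k \<in> ball 0 R" "P i \<in> ball 0 R" using R vert_in[OF k(1), of P] Pi by auto
      hence "dist 0 (P k) < R" "dist 0 (P i) < R" by auto
      hence "dist (P i) x \<le> 2 * R" using k dist_triangle[of "P i" "P k" 0]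
        by (simp add: dist_commute)
      moreover have "2 * R * (a \<bullet> x) + 2 * R * b = 2 * R * (a \<bullet> x + b)" by (simp add: distrib_left)
      ultimately show ?thesis by simp
    qed
  qed
  have cvh: "convex_on (convex hull (P ` {1..4}))
       (\<lambda>x. dist (P i) x + ((2 * R) * (a \<bullet> x) + (2 * R * b - 2 * R)))"
  proof (rule convex_on_add)
    show "convex_on (convex hull (P ` {1..4})) (dist (P i))"
      by (rule convex_on_dist[OF convex_convex_hull])
    have "convex_on (convex hull (P ` {1..4})) (\<lambda>x. ((2 * R) *\<^sub>R a) \<bullet> x + (2 * R * b - 2 * R))"
      by (rule aff_convex[OF convex_convex_hull])
    thus "convex_on (convex hull (P ` {1..4})) (\<lambda>x. (2 * R) * (a \<bullet> x) + (2 * R * b - 2 * R))"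
      by simp
  qed
  have "dist (P i) z + (2 * R) * (a \<bullet> z) + (2 * R * b - 2 * R) \<le> 0"
    using convex_on_convex_hull_bound[OF cvh] hb z(1) unfolding tetra_def
    by (simp add: add.assoc)
  hence "dist (P i) z \<le> 2 * R * (1 - f z)" by (simp add: f_def algebra_simps)
  also have "\<dots> \<le> 2 * R * (2 * d / r)" using fz R0 by (intro mult_left_mono) auto
  finally have "dist (P i) z \<le> 4 * R * d / r" by simp
  hence "norm (P i - Q j) \<le> 4 * R * d / r + d"
    using dz dist_triangle[of "P i" "Q j" z] by (simp add: dist_norm norm_minus_commute)
  also have "\<dots> = d * (1 + 4 * R / r)" by (simp add: algebra_simps)
  finally show ?thesis using j by auto
qed

lemma inball:
  assumes tv: "tetra_vertices P" and ir: "inradius (tetra P) > r1"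
  shows "\<exists>r c. r > r1 \<and> ball c r \<subseteq> tetra P"
proof -
  have inj: "inj_on P {1..4}" and nd: "\<not> affine_dependent (P ` {1..4})"
    using tv unfolding tetra_vertices_def by auto
  have "card (P ` {1..4}) = 4" using card_image[OF inj] by simp
  hence "card (P ` {1..4}) = Suc DIM(real^3)" by simp
  hence "interior (tetra P) \<noteq> {}" using interior_convex_hull_eq_empty nd
    unfolding tetra_def by blast
  then obtain x where "x \<in> interior (tetra P)" by blast
  then obtain e where "e > 0" "ball x e \<subseteq> tetra P" by (auto simp: mem_interior)
  hence ne: "{r. 0 < r \<and> (\<exists>x. ball x r \<subseteq> tetra P)} \<noteq> {}" by blast
  from less_cSupD[OF ne] ir obtain r where "r \<in> {r. 0 < r \<and> (\<exists>x. ball x r \<subseteq> tetra P)}" "r1 < r"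
    unfolding inradius_def by blast
  thus ?thesis by blast
qed

lemma vd_le:
  assumes "p permutes {1..4}"
  shows "vertex_dist P Q \<le> Max ((\<lambda>i. norm (P i - Q (p i))) ` {1..4})"
  unfolding vertex_dist_def
  by (rule Min_le) (use assms finite_permutations[of "{1..4::nat}"] in auto)

theorem mainTheorem5:
  shows "(\<forall>P0 P1. tetra_vertices P0 \<and> tetra_vertices P1 \<longrightarrow>
            hausdorff_dist (tetra P0) (tetra P1) \<le> vertex_dist P0 P1)
       \<and> (\<forall>R r1::real. 0 < r1 \<longrightarrow> (\<exists>A1>0. \<forall>P0 P1.
            tetra_vertices P0 \<and> tetra_vertices P1 \<and>
            tetra P0 \<subseteq> ball 0 R \<and> tetra P1 \<subseteq> ball 0 R \<and>
            inradius (tetra P0) > r1 \<and> inradius (tetra P1) > r1 \<longrightarrow>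
            vertex_dist P0 P1 \<le> A1 * hausdorff_dist (tetra P0) (tetra P1)))"
proof (intro conjI allI impI)
  fix P0 P1 :: "nat \<Rightarrow> real^3"
  let ?F = "(\<lambda>p. Max ((\<lambda>i. norm (P0 i - P1 (p i))) ` {1..4})) ` {p. p permutes {1..4::nat}}"
  have fin: "finite ?F" using finite_permutations[of "{1..4::nat}"] by simp
  have ne: "?F \<noteq> {}" using permutes_id by blast
  have "vertex_dist P0 P1 \<in> ?F" unfolding vertex_dist_def by (rule Min_in[OF fin ne])
  then obtain p where p: "p permutes {1..4}"
    "vertex_dist P0 P1 = Max ((\<lambda>i. norm (P0 i - P1 (p i))) ` {1..4})" by auto
  show "hausdorff_dist (tetra P0) (tetra P1) \<le> vertex_dist P0 P1"
    using hd_le[OF p(1)] p(2) by simp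
next
  fix R r1 :: real
  assume r1: "0 < r1"
  define C where "C = 1 + 4 * \<bar>R\<bar> / r1"
  have C1: "C \<ge> 1" using r1 by (simp add: C_def)
  show "\<exists>A1>0. \<forall>P0 P1.
            tetra_vertices P0 \<and> tetra_vertices P1 \<and>
            tetra P0 \<subseteq> ball 0 R \<and> tetra P1 \<subseteq> ball 0 R \<and>
            inradius (tetra P0) > r1 \<and> inradius (tetra P1) > r1 \<longrightarrow>
            vertex_dist P0 P1 \<le> A1 * hausdorff_dist (tetra P0) (tetra P1)"
  proof (intro exI[of _ "C * C"] conjI allI impI)
    show "0 < C * C" using C1 by simp
    fix P0 P1 :: "nat \<Rightarrow> real^3"
    assume H: "tetra_vertices P0 \<and> tetra_vertices P1 \<and>
            tetra P0 \<subseteq> ball 0 R \<and> tetra P1 \<subseteq> ball 0 R \<and>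
            inradius (tetra P0) > r1 \<and> inradius (tetra P1) > r1"
    define d where "d = hausdorff_dist (tetra P0) (tetra P1)"
    note hf = hd_facts[of "tetra P0" "tetra P1", OF tetra_compact tetra_compact tetra_ne tetra_ne]
    have h1: "\<forall>x\<in>tetra P0. infdist x (tetra P1) \<le> d" using hf(1) d_def by simp
    have h2: "\<forall>y\<in>tetra P1. infdist y (tetra P0) \<le> d" using hf(2) d_def by simp
    have d0: "d \<ge> 0" using h1 vert_in[of 1 P0] infdist_nonneg
      by (meson atLeastAtMost_iff order_trans le_numeral_extra(4) one_le_numeral)
    obtain r c where rc: "r > r1" "ball c r \<subseteq> tetra P0" using inball H by blast
    have r: "r > 0" using rc r1 by simp
    have close: "\<exists>j\<in>{1..4}. norm (P0 i - P1 j) \<le> d * C" if i: "i \<in> {1..4}" for i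
    proof -
      obtain j where j: "j \<in> {1..4}" "norm (P0 i - P1 j) \<le> d * (1 + 4 * R / r)"
        using vertex_close[OF _ i r rc(2) _ h1 h2] H by blast
      have "4 * R / r \<le> 4 * \<bar>R\<bar> / r" using r by (simp add: divide_right_mono)
      also have "\<dots> \<le> 4 * \<bar>R\<bar> / r1" using r rc(1) r1
        by (intro divide_left_mono) auto
      finally have "d * (1 + 4 * R / r) \<le> d * C" using d0 unfolding C_def
        by (intro mult_left_mono) auto
      thus ?thesis using j by (meson order_trans)
    qed
    then obtain f where f: "\<forall>i\<in>{1..4}. f i \<in> {1..4} \<and> norm (P0 i - P1 (f i)) \<le> d * C"
      by metis
    have nrm: "norm (P0 i - P1 j) \<le> 2 * \<bar>R\<bar>" if "i \<in> {1..4}" "j \<in> {1..4}" for i j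
    proof -
      have "P0 i \<in> ball 0 R" "P1 j \<in> ball 0 R"
        using H vert_in[OF that(1), of P0] vert_in[OF that(2), of P1] by auto
      hence "norm (P0 i) < R" "norm (P1 j) < R" by auto
      thus ?thesis using norm_triangle_ineq4[of "P0 i" "P1 j"] by linarith
    qed
    show "vertex_dist P0 P1 \<le> C * C * d"
    proof (cases "d * C < r1 / 2")
      case True
      have inj: "inj_on f {1..4}"
      proof (rule inj_onI, rule ccontr)
        fix i k assume ik: "i \<in> {1..4}" "k \<in> {1..4}" "f i = f k" "i \<noteq> k"
        have "r \<le> norm (P0 i - P0 k)"
          using separation[OF _ ik(1) ik(2) ik(4)[symmetric] r rc(2)] H by blast
        also have "\<dots> \<le> norm (P0 i - P1 (f i)) + norm (P0 k - P1 (f k))"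
          using ik(3) norm_triangle_ineq4[of "P0 i - P1 (f i)" "P0 k - P1 (f k)"] by simp
        also have "\<dots> \<le> d * C + d * C" using f ik(1,2) by (intro add_mono) blast+
        finally show False using True rc(1) by linarith
      qed
      define p where "p = (\<lambda>i. if i \<in> {1..4::nat} then f i else i)"
      have inj': "inj_on p {1..4}" using inj unfolding p_def inj_on_def by auto
      have sub: "p ` {1..4} \<subseteq> {1..4}" using f unfolding p_def by auto
      have "p ` {1..4} = {1..4}" using endo_inj_surj[OF _ sub inj'] by simp
      hence "bij_betw p {1..4} {1..4}" using inj' by (simp add: bij_betw_def)
      hence pp: "p permutes {1..4}" by (rule bij_imp_permutes) (auto simp add: p_def)
      have "vertex_dist P0 P1 \<le> Max ((\<lambda>i. norm (P0 i - P1 (p i))) ` {1..4})" by (rule vd_le[OF pp])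
      also have "\<dots> \<le> d * C" using f by (simp add: p_def)
      also have "\<dots> \<le> C * C * d"
      proof -
        have "d * C * 1 \<le> d * C * C" by (rule mult_left_mono) (use C1 d0 in auto)
        thus ?thesis by (simp add: mult_ac)
      qed
      finally show ?thesis .
    next
      case False
      have pid: "id permutes {1..4::nat}" by (rule permutes_id)
      have "vertex_dist P0 P1 \<le> Max ((\<lambda>i. norm (P0 i - P1 (id i))) ` {1..4})" by (rule vd_le[OF pid])
      also have "\<dots> \<le> 2 * \<bar>R\<bar>" using nrm by simp
      also have "2 * \<bar>R\<bar> = (r1 / 2) * (4 * \<bar>R\<bar> / r1)" using r1 by (simp add: field_simps)
      also have "\<dots> \<le> (d * C) * (4 * \<bar>R\<bar> / r1)" using False r1
        by (intro mult_right_mono) auto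
      also have "\<dots> \<le> (d * C) * C" using d0 C1 unfolding C_def
        by (intro mult_left_mono) auto
      also have "\<dots> = C * C * d" by (simp add: mult_ac)
      finally show ?thesis .
    qed
  qed
qed

end
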